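(* Let $A$ be a reachable $\mathbf{JSL}$-dfa. Then the transition semiring $\mathrm{ts}(A)$, viewed as a $\mathbf{JSL}$-dfa, satisfies $[\mathrm{ts}(A)]^{\mathsf{op}}\cong\mathrm{rqc}(A^{\mathsf{op}})$ as $\mathbf{JSL}$-dfas (equivalently, since both are simple, the states of $[\mathrm{ts}(A)]^{\mathsf{op}}$ accept exactly the languages that are states of $\mathrm{rqc}(A^{\mathsf{op}})$).
   Context: A $\mathbf{JSL}$-dfa $A=(S,\delta,s_0,F)$: finite semilattice $S$, join-preserving $\delta_a\colon S\to S$, initial state $s_0$, final states $F=\{s:s\not\le s_f\}$ for some $s_f$; $\delta_w=\delta_{a_n}\circ\cdots\circ\delta_{a_1}$ for $w=a_1\cdots a_n$; $L(A,s)=\{w:\delta_w(s)\in F\}$. $A$ is reachable if every state is a finite join of states $\delta_w(s_0)$; simple if distinct states accept distinct languages. Morphisms: join-preserving maps preserving transitions, initial state and final states (both ways). The dual $A^{\mathsf{op}}$ has reversed order, transitions $\delta_a^*(s)=$ largest $t$ with $\delta_a(t)\le s$, initial state the largest non-final state, final states $\{s:s_0\not\le s\}$. Transition semiring: $\mathrm{ts}(A)$ is the set of all maps $\bigvee_{i=1}^n\delta_{w_i}\colon S\to S$ ($n\ge0$, $w_i\in\Sigma^*$, join taken pointwise), ordered pointwise, viewed as a $\mathbf{JSL}$-dfa with initial state $\delta_\epsilon=\mathrm{id}_S$, transitions $\bigvee_i\delta_{w_i}\xrightarrow{a}\bigvee_i\delta_{w_ia}$, and final states those $\bigvee_i\delta_{w_i}$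 such that some $w_i$ is accepted by $A$. For a simple $\mathbf{JSL}$-dfa $B$, $\mathrm{rqc}(B)$ (right-derivative closure) is the $\mathbf{JSL}$-dfa whose states are the smallest set of languages containing all $L(B,s)$ and closed under finite unions and right derivatives $K\mapsto Kv^{-1}=\{w:wv\in K\}$, ordered by inclusion, with transitions $K\mapsto a^{-1}K$, initial state the language of $B$, final states those containing $\epsilon$. *)

theory Defs
  imports Main
begin

text \<open>A JSL-dfa is represented concretely by a carrier set of states with an
  explicit partial order; joins are least upper bounds w.r.t. this order.
  The alphabet is the type 'c.\<close>

record ('s, 'c) jdfa =
  St    :: "'s set"
  le    :: "'s \<Rightarrow> 's \<Rightarrow> bool"
  delta :: "'c \<Rightarrow> 's \<Rightarrow> 's"
  init  :: "'s"
  fin   :: "'s set"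

definition is_lub :: "('s, 'c) jdfa \<Rightarrow> 's set \<Rightarrow> 's \<Rightarrow> bool" where
  "is_lub A X x \<longleftrightarrow> x \<in> St A \<and> (\<forall>y\<in>X. le A y x)
     \<and> (\<forall>z\<in>St A. (\<forall>y\<in>X. le A y z) \<longrightarrow> le A x z)"

definition join :: "('s, 'c) jdfa \<Rightarrow> 's set \<Rightarrow> 's" where
  "join A X = (THE x. is_lub A X x)"

definition join_pres :: "('s, 'c) jdfa \<Rightarrow> ('t, 'd) jdfa \<Rightarrow> ('s \<Rightarrow> 't) \<Rightarrow> bool" where
  "join_pres A B f \<longleftrightarrow> f ` St A \<subseteq> St B \<and>
     (\<forall>X. X \<subseteq> St A \<and> finite X \<longrightarrow> f (join A X) = join B (f ` X))"

definition jsl_dfa :: "('s, 'c) jdfa \<Rightarrow> bool" where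
  "jsl_dfa A \<longleftrightarrow>
     finite (St A) \<and>
     (\<forall>x\<in>St A. le A x x) \<and>
     (\<forall>x\<in>St A. \<forall>y\<in>St A. le A x y \<and> le A y x \<longrightarrow> x = y) \<and>
     (\<forall>x\<in>St A. \<forall>y\<in>St A. \<forall>z\<in>St A. le A x y \<and> le A y z \<longrightarrow> le A x z) \<and>
     (\<forall>X. X \<subseteq> St A \<and> finite X \<longrightarrow> (\<exists>x. is_lub A X x)) \<and>
     (\<forall>a. join_pres A A (delta A a)) \<and>
     init A \<in> St A \<and>
     (\<exists>sf\<in>St A. fin A = {s \<in> St A. \<not> le A s sf})"

text \<open>delta_w for w = a1...an is delta_an o ... o delta_a1.\<close>
definition dword :: "('s, 'c) jdfa \<Rightarrow> 'c list \<Rightarrow> 's \<Rightarrow> 's" where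
  "dword A w s = fold (delta A) w s"

definition lang :: "('s, 'c) jdfa \<Rightarrow> 's \<Rightarrow> 'c list set" where
  "lang A s = {w. dword A w s \<in> fin A}"

definition reachable :: "('s, 'c) jdfa \<Rightarrow> bool" where
  "reachable A \<longleftrightarrow> (\<forall>s\<in>St A. \<exists>X. finite X \<and> X \<subseteq> {dword A w (init A) | w. True}
                                    \<and> s = join A X)"

definition simple :: "('s, 'c) jdfa \<Rightarrow> bool" where
  "simple A \<longleftrightarrow> (\<forall>s\<in>St A. \<forall>t\<in>St A. lang A s = lang A t \<longrightarrow> s = t)"

definition morphism :: "('s, 'c) jdfa \<Rightarrow> ('t, 'c) jdfa \<Rightarrow> ('s \<Rightarrow> 't) \<Rightarrow> bool" where
  "morphism A B f \<longleftrightarrow> join_pres A B f \<and>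
     (\<forall>a. \<forall>s\<in>St A. f (delta A a s) = delta B a (f s)) \<and>
     f (init A) = init B \<and>
     (\<forall>s\<in>St A. s \<in> fin A \<longleftrightarrow> f s \<in> fin B)"

definition jdfa_iso :: "('s, 'c) jdfa \<Rightarrow> ('t, 'c) jdfa \<Rightarrow> bool" where
  "jdfa_iso A B \<longleftrightarrow> (\<exists>f g. morphism A B f \<and> morphism B A g \<and>
      (\<forall>s\<in>St A. g (f s) = s) \<and> (\<forall>t\<in>St B. f (g t) = t))"

definition dual :: "('s, 'c) jdfa \<Rightarrow> ('s, 'c) jdfa" where
  "dual A = \<lparr> St = St A,
     le = (\<lambda>x y. le A y x),
     delta = (\<lambda>a s. THE t. t \<in> St A \<and> le A (delta A a t) s \<and>
                     (\<forall>t'\<in>St A. le A (delta A a t') s \<longrightarrow> le A t' t)),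
     init = (THE t. t \<in> St A - fin A \<and> (\<forall>t'\<in>St A - fin A. le A t' t)),
     fin = {s \<in> St A. \<not> le A (init A) s} \<rparr>"

definition tsmap :: "('s, 'c) jdfa \<Rightarrow> 'c list set \<Rightarrow> 's \<Rightarrow> 's" where
  "tsmap A W = (\<lambda>s. if s \<in> St A then join A ((\<lambda>w. dword A w s) ` W) else undefined)"

definition ts :: "('s, 'c) jdfa \<Rightarrow> ('s \<Rightarrow> 's, 'c) jdfa" where
  "ts A = \<lparr> St = {tsmap A W | W. finite W},
     le = (\<lambda>f g. \<forall>s\<in>St A. le A (f s) (g s)),
     delta = (\<lambda>a f. tsmap A ((\<lambda>w. w @ [a]) ` (SOME W. finite W \<and> f = tsmap A W))),
     init = tsmap A {[]},
     fin = {f. \<exists>W. finite W \<and> f = tsmap A W \<and> (\<exists>w\<in>W. w \<in> lang A (init A))} \<rparr>"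

inductive_set rqc_states :: "('s, 'c) jdfa \<Rightarrow> 'c list set set" for B where
  base: "s \<in> St B \<Longrightarrow> lang B s \<in> rqc_states B"
| empty: "{} \<in> rqc_states B"
| union: "K \<in> rqc_states B \<Longrightarrow> K' \<in> rqc_states B \<Longrightarrow> K \<union> K' \<in> rqc_states B"
| rderiv: "K \<in> rqc_states B \<Longrightarrow> {w. w @ v \<in> K} \<in> rqc_states B"

definition rqc :: "('s, 'c) jdfa \<Rightarrow> ('c list set, 'c) jdfa" where
  "rqc B = \<lparr> St = rqc_states B,
     le = (\<subseteq>),
     delta = (\<lambda>a K. {w. a # w \<in> K}),
     init = lang B (init B),
     fin = {K \<in> rqc_states B. [] \<in> K} \<rparr>"

end

theory Submission
  imports Defs "HOL-Library.FuncSet"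
begin

lemma dword_Nil[simp]: "dword B [] s = s" by (simp add: dword_def)
lemma dword_Cons[simp]: "dword B (a#w) s = dword B w (delta B a s)" by (simp add: dword_def)
lemma dword_append[simp]: "dword B (u@v) s = dword B v (dword B u s)" by (simp add: dword_def)

lemma dual_simps[simp]: "St (dual B) = St B" "le (dual B) x y = le B y x"
  "fin (dual B) = {s \<in> St B. \<not> le B (init B) s}"
  by (simp_all add: dual_def)

lemma delta_dual: "delta (dual B) a s = (THE t. t \<in> St B \<and> le B (delta B a t) s \<and>
                     (\<forall>t'\<in>St B. le B (delta B a t') s \<longrightarrow> le B t' t))"
  by (simp add: dual_def)

lemma init_dual: "init (dual B) = (THE t. t \<in> St B - fin B \<and> (\<forall>t'\<in>St B - fin B. le B t' t))"
  by (simp add: dual_def)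

lemma lang_delta: "lang B (delta B a s) = {w. a # w \<in> lang B s}"
  by (simp add: lang_def)

locale jsl = fixes B :: "('s,'c) jdfa" assumes jsl: "jsl_dfa B"
begin

lemma jp1: "finite (St B)"
  using jsl unfolding jsl_dfa_def by (elim conjE) assumption
lemma jp2: "\<forall>x\<in>St B. le B x x"
  using jsl unfolding jsl_dfa_def by (elim conjE) assumption
lemma jp3: "\<forall>x\<in>St B. \<forall>y\<in>St B. le B x y \<and> le B y x \<longrightarrow> x = y"
  using jsl unfolding jsl_dfa_def by (elim conjE) assumption
lemma jp4: "\<forall>x\<in>St B. \<forall>y\<in>St B. \<forall>z\<in>St B. le B x y \<and> le B y z \<longrightarrow> le B x z"
  using jsl unfolding jsl_dfa_def by (elim conjE) assumption
lemma jp5: "\<forall>X. X \<subseteq> St B \<and> finite X \<longrightarrow> (\<exists>x. is_lub B X x)"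
  using jsl unfolding jsl_dfa_def by (elim conjE) assumption
lemma jp6: "\<forall>a. join_pres B B (delta B a)"
  using jsl unfolding jsl_dfa_def by (elim conjE) assumption
lemma jp7: "init B \<in> St B"
  using jsl unfolding jsl_dfa_def by (elim conjE) assumption
lemma jp8: "\<exists>sf\<in>St B. fin B = {s \<in> St B. \<not> le B s sf}"
  using jsl unfolding jsl_dfa_def by (elim conjE) assumption
lemmas jparts = jp1 jp2 jp3 jp4 jp5 jp6 jp7 jp8

lemma fin_St: "finite (St B)" by (rule jparts(1))
lemma lrefl: "x \<in> St B \<Longrightarrow> le B x x" using jparts(2) by blast
lemma lanti: "x \<in> St B \<Longrightarrow> y \<in> St B \<Longrightarrow> le B x y \<Longrightarrow> le B y x \<Longrightarrow> x = y"
  using jparts(3) by blast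
lemma ltrans: "x \<in> St B \<Longrightarrow> y \<in> St B \<Longrightarrow> z \<in> St B \<Longrightarrow> le B x y \<Longrightarrow> le B y z \<Longrightarrow> le B x z"
  using jparts(4) by blast
lemma init_in: "init B \<in> St B" by (rule jparts(7))
lemma jp: "join_pres B B (delta B a)" using jparts(6) by blast

lemma join_unique: assumes xl: "is_lub B X x" shows "join B X = x"
  unfolding join_def
proof (rule the_equality)
  show "is_lub B X x" by (rule xl)
next
  fix y assume "is_lub B X y"
  then show "y = x" using xl unfolding is_lub_def using lanti by blast
qed

lemma join_lub: "finite X \<Longrightarrow> X \<subseteq> St B \<Longrightarrow> is_lub B X (join B X)"
proof -
  assume "finite X" "X \<subseteq> St B"
  then obtain x where "is_lub B X x" using jparts(5) by blast
  then show ?thesis using join_unique by simp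
qed

lemma J0: "finite X \<Longrightarrow> X \<subseteq> St B \<Longrightarrow> join B X \<in> St B"
  using join_lub[of X] unfolding is_lub_def by blast
lemma J1: "finite X \<Longrightarrow> X \<subseteq> St B \<Longrightarrow> x \<in> X \<Longrightarrow> le B x (join B X)"
  using join_lub[of X] unfolding is_lub_def by blast
lemma J2: "finite X \<Longrightarrow> X \<subseteq> St B \<Longrightarrow> z \<in> St B \<Longrightarrow> (\<And>y. y \<in> X \<Longrightarrow> le B y z) \<Longrightarrow> le B (join B X) z"
  using join_lub[of X] unfolding is_lub_def by blast

lemma le_join_iff: "finite X \<Longrightarrow> X \<subseteq> St B \<Longrightarrow> z \<in> St B \<Longrightarrow> le B (join B X) z \<longleftrightarrow> (\<forall>x\<in>X. le B x z)"
proof -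
  assume a: "finite X" "X \<subseteq> St B" "z \<in> St B"
  show ?thesis
  proof
    assume h: "le B (join B X) z"
    show "\<forall>x\<in>X. le B x z"
    proof
      fix x assume x: "x \<in> X"
      show "le B x z" using ltrans[of x "join B X" z] J1[OF a(1,2) x] J0[OF a(1,2)] a x h by blast
    qed
  next
    assume "\<forall>x\<in>X. le B x z"
    then show "le B (join B X) z" using J2[OF a] by blast
  qed
qed

lemma delta_in: "s \<in> St B \<Longrightarrow> delta B a s \<in> St B"
  using jp unfolding join_pres_def by blast
lemma delta_join: "finite X \<Longrightarrow> X \<subseteq> St B \<Longrightarrow> delta B a (join B X) = join B (delta B a ` X)"
  using jp unfolding join_pres_def by blast

lemma join_pair: "x \<in> St B \<Longrightarrow> y \<in> St B \<Longrightarrow> le B x y \<Longrightarrow> join B {x,y} = y"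
  by (rule join_unique) (auto simp: is_lub_def lrefl)

lemma delta_mono: "x \<in> St B \<Longrightarrow> y \<in> St B \<Longrightarrow> le B x y \<Longrightarrow> le B (delta B a x) (delta B a y)"
proof -
  assume xy: "x \<in> St B" "y \<in> St B" "le B x y"
  have "delta B a y = join B (delta B a ` {x,y})" using delta_join[of "{x,y}" a] join_pair xy by simp
  then show ?thesis using J1[of "delta B a ` {x,y}" "delta B a x"] xy delta_in by auto
qed

lemma dword_in: "s \<in> St B \<Longrightarrow> dword B w s \<in> St B"
  by (induction w arbitrary: s) (auto simp: delta_in)

lemma dword_join: "finite X \<Longrightarrow> X \<subseteq> St B \<Longrightarrow> dword B w (join B X) = join B (dword B w ` X)"
proof (induction w arbitrary: X)
  case Nil then show ?case by simp
next
  case (Cons a w)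
  have f: "finite (delta B a ` X)" "delta B a ` X \<subseteq> St B" using Cons.prems delta_in by auto
  have "dword B (a#w) (join B X) = dword B w (join B (delta B a ` X))" using Cons.prems delta_join by simp
  also have "... = join B (dword B w ` delta B a ` X)" using Cons.IH[OF f] by simp
  finally show ?case by (simp add: image_image)
qed

lemma sf: "init (dual B) \<in> St B \<and> fin B = {s \<in> St B. \<not> le B s (init (dual B))}"
proof -
  obtain sf where sf: "sf \<in> St B" "fin B = {s \<in> St B. \<not> le B s sf}" using jparts(8) by blast
  have "init (dual B) = sf"
    unfolding init_dual
  proof (rule the_equality)
    show "sf \<in> St B - fin B \<and> (\<forall>t'\<in>St B - fin B. le B t' sf)" using sf lrefl by auto
  next
    fix t assume h: "t \<in> St B - fin B \<and> (\<forall>t'\<in>St B - fin B. le B t' t)"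
    then have "le B t sf" "le B sf t" using sf lrefl by auto
    then show "t = sf" using lanti h sf by blast
  qed
  then show ?thesis using sf by simp
qed

lemma lang_char: "s \<in> St B \<Longrightarrow> w \<in> lang B s \<longleftrightarrow> \<not> le B (dword B w s) (init (dual B))"
  using sf dword_in by (auto simp: lang_def)

lemma adj: assumes t: "t \<in> St B"
  shows "delta (dual B) a t \<in> St B \<and> (\<forall>x\<in>St B. le B x (delta (dual B) a t) \<longleftrightarrow> le B (delta B a x) t)"
proof -
  let ?Y = "{x \<in> St B. le B (delta B a x) t}"
  let ?m = "join B ?Y"
  have fY: "finite ?Y" "?Y \<subseteq> St B" using fin_St by auto
  have m: "?m \<in> St B" using J0 fY by blast
  have fY2: "finite (delta B a ` ?Y)" "delta B a ` ?Y \<subseteq> St B" using fY delta_in by auto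
  have dm: "le B (delta B a ?m) t"
    using delta_join[OF fY] le_join_iff[OF fY2 t] by auto
  have key: "\<forall>x\<in>St B. le B x ?m \<longleftrightarrow> le B (delta B a x) t"
  proof safe
    fix x assume x: "x \<in> St B" "le B x ?m"
    then show "le B (delta B a x) t" using delta_mono[OF x(1) m x(2)] ltrans delta_in m t dm x(1) by blast
  next
    fix x assume "x \<in> St B" "le B (delta B a x) t"
    then show "le B x ?m" using J1[OF fY] by auto
  qed
  have "delta (dual B) a t = ?m"
    unfolding delta_dual
  proof (rule the_equality)
    show "?m \<in> St B \<and> le B (delta B a ?m) t \<and> (\<forall>t'\<in>St B. le B (delta B a t') t \<longrightarrow> le B t' ?m)"
      using m dm key by blast
  next
    fix t' assume h: "t' \<in> St B \<and> le B (delta B a t') t \<and> (\<forall>t''\<in>St B. le B (delta B a t'') t \<longrightarrow> le B t'' t')"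
    then have "le B t' ?m" "le B ?m t'" using key m dm by auto
    then show "t' = ?m" using lanti h m by blast
  qed
  then show ?thesis using m key by simp
qed

lemma dual_dword: "t \<in> St B \<Longrightarrow> dword (dual B) w t \<in> St B \<and>
   (\<forall>x\<in>St B. le B x (dword (dual B) w t) \<longleftrightarrow> le B (dword B (rev w) x) t)"
proof (induction w arbitrary: t)
  case Nil then show ?case by simp
next
  case (Cons a w)
  note a = adj[OF Cons.prems, of a]
  from Cons.IH[of "delta (dual B) a t"] a have ih:
    "dword (dual B) w (delta (dual B) a t) \<in> St B \<and>
     (\<forall>x\<in>St B. le B x (dword (dual B) w (delta (dual B) a t)) \<longleftrightarrow> le B (dword B (rev w) x) (delta (dual B) a t))"
    by blast
  show ?case using ih a dword_in by auto
qed

lemma lang_dual: "t \<in> St B \<Longrightarrow> lang (dual B) t = {w. \<not> le B (dword B (rev w) (init B)) t}"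
  using dual_dword[of t] init_in by (auto simp: lang_def)

lemma glb: assumes X: "X \<subseteq> St B"
  shows "join (dual B) X \<in> St B \<and> (\<forall>z\<in>St B. le B z (join (dual B) X) \<longleftrightarrow> (\<forall>y\<in>X. le B z y))"
proof -
  let ?L = "{z \<in> St B. \<forall>y\<in>X. le B z y}"
  let ?m = "join B ?L"
  have fL: "finite ?L" "?L \<subseteq> St B" using fin_St by auto
  have m: "?m \<in> St B" using J0 fL by blast
  have key: "\<forall>z\<in>St B. le B z ?m \<longleftrightarrow> (\<forall>y\<in>X. le B z y)"
  proof safe
    fix z y assume z: "z \<in> St B" "le B z ?m" and y: "y \<in> X"
    have "le B ?m y" using J2[OF fL] X y by auto
    then show "le B z y" using ltrans z m X y by blast
  next
    fix z assume "z \<in> St B" "\<forall>y\<in>X. le B z y"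
    then show "le B z ?m" using J1[OF fL] by auto
  qed
  have lub: "is_lub (dual B) X ?m" unfolding is_lub_def using m key lrefl by auto
  have "join (dual B) X = ?m"
    unfolding join_def[of "dual B"]
  proof (rule the_equality, rule lub)
    fix x assume h: "is_lub (dual B) X x"
    then have x: "x \<in> St B" "\<forall>y\<in>X. le B x y" "\<forall>z\<in>St B. (\<forall>y\<in>X. le B z y) \<longrightarrow> le B z x"
      unfolding is_lub_def by auto
    have "le B x ?m" using key x by blast
    moreover have "le B ?m x" using x(3) m key lrefl by blast
    ultimately show "x = ?m" using lanti x(1) m by blast
  qed
  then show ?thesis using m key by simp
qed

subsection \<open>Transition semiring\<close>

lemma tsmap_app: "s \<in> St B \<Longrightarrow> tsmap B W s = join B ((\<lambda>w. dword B w s) ` W)"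
  "s \<notin> St B \<Longrightarrow> tsmap B W s = undefined" by (simp_all add: tsmap_def)

lemma tsmap_in: "finite W \<Longrightarrow> s \<in> St B \<Longrightarrow> tsmap B W s \<in> St B"
  using J0[of "(\<lambda>w. dword B w s) ` W"] dword_in tsmap_app by auto

lemma St_ts: "St (ts B) = {tsmap B W | W. finite W}" by (simp add: ts_def)
lemma le_ts: "le (ts B) f g \<longleftrightarrow> (\<forall>s\<in>St B. le B (f s) (g s))" by (simp add: ts_def)
lemma init_ts0: "init (ts B) = tsmap B {[]}" by (simp add: ts_def)

lemma T_PiE: "f \<in> St (ts B) \<Longrightarrow> f \<in> St B \<rightarrow>\<^sub>E St B"
  using tsmap_in tsmap_app by (auto simp: St_ts PiE_def extensional_def)
lemma fin_T: "finite (St (ts B))"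
  by (rule finite_subset[OF _ finite_PiE[OF fin_St, of "\<lambda>_. St B"]]) (use T_PiE fin_St in auto)
lemma T_in: "f \<in> St (ts B) \<Longrightarrow> s \<in> St B \<Longrightarrow> f s \<in> St B" using T_PiE by auto
lemma T_out: "f \<in> St (ts B) \<Longrightarrow> s \<notin> St B \<Longrightarrow> f s = undefined"
  using T_PiE by (auto simp: PiE_def extensional_def)

lemma ts_antisym: "f \<in> St (ts B) \<Longrightarrow> g \<in> St (ts B) \<Longrightarrow> le (ts B) f g \<Longrightarrow> le (ts B) g f \<Longrightarrow> f = g"
proof (rule ext)
  fix s assume a: "f \<in> St (ts B)" "g \<in> St (ts B)" "le (ts B) f g" "le (ts B) g f"
  show "f s = g s"
  proof (cases "s \<in> St B")
    case True then show ?thesis using a lanti T_in le_ts by metis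
  next
    case False then show ?thesis using a T_out by metis
  qed
qed

lemma T_rep: "f \<in> St (ts B) \<Longrightarrow> \<exists>W. finite W \<and> f = tsmap B W" by (auto simp: St_ts)

lemma ts_join: assumes X: "finite X" "X \<subseteq> St (ts B)"
  shows "join (ts B) X = (\<lambda>s. if s \<in> St B then join B ((\<lambda>f. f s) ` X) else undefined)"
    and "join (ts B) X \<in> St (ts B)"
    and "is_lub (ts B) X (join (ts B) X)"
proof -
  define P where "P = (\<lambda>s. if s \<in> St B then join B ((\<lambda>f. f s) ` X) else undefined)"
  define R where "R f = (SOME W. finite W \<and> f = tsmap B W)" for f
  have R: "finite (R f) \<and> f = tsmap B (R f)" if "f \<in> X" for f
    unfolding R_def by (rule someI_ex) (use that X T_rep in blast)
  define U where "U = (\<Union>f\<in>X. R f)"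
  have fU: "finite U" using R X(1) by (auto simp: U_def)
  have Xs: "finite ((\<lambda>f. f s) ` X)" "(\<lambda>f. f s) ` X \<subseteq> St B" if "s \<in> St B" for s
    using X T_in that by auto
  have Us: "finite ((\<lambda>w. dword B w s) ` U)" "(\<lambda>w. dword B w s) ` U \<subseteq> St B" if "s \<in> St B" for s
    using fU dword_in that by auto
  have Rs: "finite ((\<lambda>w. dword B w s) ` R f)" "(\<lambda>w. dword B w s) ` R f \<subseteq> St B" if "s \<in> St B" "f \<in> X" for s f
    using R dword_in that by auto
  have UP: "tsmap B U s = P s" for s
  proof (cases "s \<in> St B")
    case False then show ?thesis by (simp add: tsmap_app P_def)
  next
    case True
    have fs: "f s = join B ((\<lambda>w. dword B w s) ` R f)" if f: "f \<in> X" for f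
      using R[OF f] tsmap_app(1)[OF True] by metis
    have tU: "tsmap B U s = join B ((\<lambda>w. dword B w s) ` U)" using tsmap_app True by blast
    have tUin: "tsmap B U s \<in> St B" using tsmap_in fU True by blast
    have "is_lub B ((\<lambda>f. f s) ` X) (tsmap B U s)"
      unfolding is_lub_def
    proof (intro conjI ballI impI)
      show "tsmap B U s \<in> St B" by (rule tUin)
    next
      fix y assume "y \<in> (\<lambda>f. f s) ` X"
      then obtain f where f: "f \<in> X" and y: "y = f s" by blast
      have "le B (join B ((\<lambda>w. dword B w s) ` R f)) (tsmap B U s)"
        unfolding le_join_iff[OF Rs[OF True f] tUin]
      proof
        fix x assume "x \<in> (\<lambda>w. dword B w s) ` R f"
        then have "x \<in> (\<lambda>w. dword B w s) ` U" using f by (auto simp: U_def)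
        then show "le B x (tsmap B U s)" using J1[OF Us[OF True]] tU by simp
      qed
      then show "le B y (tsmap B U s)" using fs[OF f] y by simp
    next
      fix z assume z: "z \<in> St B" and ub: "\<forall>y\<in>(\<lambda>f. f s) ` X. le B y z"
      show "le B (tsmap B U s) z"
        unfolding tU le_join_iff[OF Us[OF True] z]
      proof
        fix x assume "x \<in> (\<lambda>w. dword B w s) ` U"
        then obtain f w where f: "f \<in> X" and w: "w \<in> R f" and x: "x = dword B w s" by (auto simp: U_def)
        have "le B x (f s)" using J1[OF Rs[OF True f]] fs[OF f] x w by auto
        moreover have "le B (f s) z" using ub f by blast
        ultimately show "le B x z" using ltrans x dword_in True z T_in f X by blast
      qed
    qed
    then show ?thesis using join_unique True by (simp add: P_def)
  qed
  have PU: "P = tsmap B U" using UP by auto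
  have PT: "P \<in> St (ts B)" using PU fU by (auto simp: St_ts)
  have lubP: "is_lub (ts B) X P"
    unfolding is_lub_def
  proof (intro conjI ballI impI)
    show "P \<in> St (ts B)" by (rule PT)
  next
    fix f assume f: "f \<in> X"
    show "le (ts B) f P" unfolding le_ts
    proof
      fix s assume s: "s \<in> St B"
      show "le B (f s) (P s)" using J1[OF Xs[OF s]] f s by (simp add: P_def)
    qed
  next
    fix z assume z: "z \<in> St (ts B)" and ub: "\<forall>f\<in>X. le (ts B) f z"
    show "le (ts B) P z" unfolding le_ts
    proof
      fix s assume s: "s \<in> St B"
      show "le B (P s) (z s)" using J2[OF Xs[OF s] T_in[OF z s]] ub s le_ts by (auto simp: P_def)
    qed
  qed
  have "join (ts B) X = P"
    unfolding join_def[of "ts B"]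
  proof (rule the_equality, rule lubP)
    fix x assume "is_lub (ts B) X x"
    then show "x = P" using lubP ts_antisym unfolding is_lub_def by blast
  qed
  then show "join (ts B) X = (\<lambda>s. if s \<in> St B then join B ((\<lambda>f. f s) ` X) else undefined)"
    "join (ts B) X \<in> St (ts B)" "is_lub (ts B) X (join (ts B) X)"
    using PT lubP by (simp_all add: P_def)
qed

lemma delta_ts: assumes f: "f \<in> St (ts B)"
  shows "delta (ts B) a f = (\<lambda>s. if s \<in> St B then delta B a (f s) else undefined)"
    and "delta (ts B) a f \<in> St (ts B)"
proof -
  define W where "W = (SOME W. finite W \<and> f = tsmap B W)"
  have W: "finite W \<and> f = tsmap B W" unfolding W_def by (rule someI_ex) (use f T_rep in blast)
  have d: "delta (ts B) a f = tsmap B ((\<lambda>w. w @ [a]) ` W)" by (simp add: ts_def W_def)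
  show "delta (ts B) a f \<in> St (ts B)" using d W by (auto simp: St_ts)
  show "delta (ts B) a f = (\<lambda>s. if s \<in> St B then delta B a (f s) else undefined)"
  proof (rule ext)
    fix s show "delta (ts B) a f s = (if s \<in> St B then delta B a (f s) else undefined)"
    proof (cases "s \<in> St B")
      case True
      have im: "(\<lambda>w. dword B w s) ` ((\<lambda>w. w @ [a]) ` W) = delta B a ` ((\<lambda>w. dword B w s) ` W)"
        by (auto simp: image_image)
      have fs: "f s = join B ((\<lambda>w. dword B w s) ` W)" using W tsmap_app True by metis
      have "delta (ts B) a f s = join B (delta B a ` ((\<lambda>w. dword B w s) ` W))"
        using d tsmap_app(1)[OF True] im by simp
      also have "... = delta B a (f s)"
      proof -
        have sub: "(\<lambda>w. dword B w s) ` W \<subseteq> St B" using dword_in True by auto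
        show ?thesis using fs delta_join[of "(\<lambda>w. dword B w s) ` W" a] W sub by simp
      qed
      finally show ?thesis using True by simp
    next
      case False then show ?thesis using d tsmap_app by simp
    qed
  qed
qed

lemma init_ts: "init (ts B) = (\<lambda>s. if s \<in> St B then s else undefined)"
  "init (ts B) \<in> St (ts B)"
proof -
  show "init (ts B) \<in> St (ts B)" by (auto simp: St_ts init_ts0)
  show "init (ts B) = (\<lambda>s. if s \<in> St B then s else undefined)"
  proof (rule ext)
    fix s show "init (ts B) s = (if s \<in> St B then s else undefined)"
    proof (cases "s \<in> St B")
      case True
      have "join B {s} = s" by (rule join_unique) (use True lrefl in \<open>auto simp: is_lub_def\<close>)
      then show ?thesis using True by (simp add: init_ts0 tsmap_app)
    qed (simp add: init_ts0 tsmap_app)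
  qed
qed

lemma fin_ts: "fin (ts B) = {f \<in> St (ts B). \<not> le B (f (init B)) (init (dual B))}"
proof safe
  fix f assume "f \<in> fin (ts B)"
  then obtain W w where W: "finite W" "f = tsmap B W" "w \<in> W" "w \<in> lang B (init B)"
    by (auto simp: ts_def)
  show "f \<in> St (ts B)" using W by (auto simp: St_ts)
  assume le: "le B (f (init B)) (init (dual B))"
  have i: "init B \<in> St B" by (rule init_in)
  have fi: "f (init B) = join B ((\<lambda>w. dword B w (init B)) ` W)" using W tsmap_app i by simp
  have "le B (dword B w (init B)) (f (init B))" using J1[of "(\<lambda>w. dword B w (init B)) ` W"] fi W dword_in i by auto
  moreover have "f (init B) \<in> St B" using tsmap_in[OF W(1) i] W(2) by simp
  ultimately have "le B (dword B w (init B)) (init (dual B))"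
    using le ltrans[of "dword B w (init B)" "f (init B)" "init (dual B)"] dword_in[OF i] sf by blast
  then show False using W(4) lang_char i by blast
next
  fix f assume f: "f \<in> St (ts B)" and nle: "\<not> le B (f (init B)) (init (dual B))"
  then obtain W where W: "finite W" "f = tsmap B W" using T_rep by blast
  have i: "init B \<in> St B" by (rule init_in)
  have fi: "f (init B) = join B ((\<lambda>w. dword B w (init B)) ` W)" using W tsmap_app i by simp
  have "\<not> (\<forall>x\<in>(\<lambda>w. dword B w (init B)) ` W. le B x (init (dual B)))"
    using nle fi le_join_iff[of "(\<lambda>w. dword B w (init B)) ` W" "init (dual B)"] W dword_in i sf by auto
  then obtain w where w: "w \<in> W" "\<not> le B (dword B w (init B)) (init (dual B))" by blast
  then have "w \<in> lang B (init B)" using lang_char i by blast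
  then show "f \<in> fin (ts B)" using W w by (auto simp: ts_def)
qed

lemma jsl_ts: "jsl_dfa (ts B)"
  unfolding jsl_dfa_def
proof (intro conjI ballI allI impI)
  show "finite (St (ts B))" by (rule fin_T)
next
  fix x assume "x \<in> St (ts B)" then show "le (ts B) x x" using lrefl T_in unfolding le_ts by blast
next
  fix x y assume "x \<in> St (ts B)" "y \<in> St (ts B)" "le (ts B) x y \<and> le (ts B) y x"
  then show "x = y" using ts_antisym by blast
next
  fix x y z assume a: "x \<in> St (ts B)" "y \<in> St (ts B)" "z \<in> St (ts B)" "le (ts B) x y \<and> le (ts B) y z"
  show "le (ts B) x z" unfolding le_ts
  proof
    fix s assume s: "s \<in> St B"
    have "le B (x s) (y s)" "le B (y s) (z s)" using a s unfolding le_ts by blast+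
    then show "le B (x s) (z s)" using ltrans[of "x s" "y s" "z s"] T_in a s by blast
  qed
next
  fix X assume "X \<subseteq> St (ts B) \<and> finite X"
  then show "\<exists>x. is_lub (ts B) X x" using ts_join(3) by blast
next
  fix a
  show "join_pres (ts B) (ts B) (delta (ts B) a)"
    unfolding join_pres_def
  proof (intro conjI allI impI)
    show "delta (ts B) a ` St (ts B) \<subseteq> St (ts B)" using delta_ts(2) by blast
  next
    fix X assume X: "X \<subseteq> St (ts B) \<and> finite X"
    have X2: "finite (delta (ts B) a ` X)" "delta (ts B) a ` X \<subseteq> St (ts B)" using X delta_ts(2) by auto
    show "delta (ts B) a (join (ts B) X) = join (ts B) (delta (ts B) a ` X)"
    proof (rule ext)
      fix s
      show "delta (ts B) a (join (ts B) X) s = join (ts B) (delta (ts B) a ` X) s"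
      proof (cases "s \<in> St B")
        case True
        have im: "(\<lambda>g. g s) ` delta (ts B) a ` X = delta B a ` ((\<lambda>f. f s) ` X)"
        proof -
          have "(\<lambda>g. g s) ` delta (ts B) a ` X = (\<lambda>f. delta (ts B) a f s) ` X" by (simp add: image_image)
          also have "... = (\<lambda>f. delta B a (f s)) ` X"
            by (rule image_cong) (use X delta_ts(1) True in auto)
          finally show ?thesis by (simp add: image_image)
        qed
        have Xs: "finite ((\<lambda>f. f s) ` X)" "(\<lambda>f. f s) ` X \<subseteq> St B" using X T_in True by auto
        show ?thesis
          using ts_join(1)[OF X2] ts_join(1,2)[of X] X delta_ts(1) True im delta_join[OF Xs] by simp
      next
        case False
        then show ?thesis using ts_join(1)[OF X2] ts_join(1,2)[of X] X delta_ts(1) by simp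
      qed
    qed
  qed
next
  show "init (ts B) \<in> St (ts B)" by (rule init_ts(2))
next
  define Z where "Z = {f \<in> St (ts B). le B (f (init B)) (init (dual B))}"
  have Z: "finite Z" "Z \<subseteq> St (ts B)" using fin_T by (auto simp: Z_def)
  let ?sf = "join (ts B) Z"
  have i: "init B \<in> St B" by (rule init_in)
  have key: "le (ts B) f ?sf \<longleftrightarrow> le B (f (init B)) (init (dual B))" if f: "f \<in> St (ts B)" for f
  proof
    assume "le (ts B) f ?sf"
    then have a: "le B (f (init B)) (?sf (init B))" using le_ts i by blast
    have Zs: "finite ((\<lambda>g. g (init B)) ` Z)" "(\<lambda>g. g (init B)) ` Z \<subseteq> St B" using Z T_in i by auto
    have "le B (?sf (init B)) (init (dual B))"
      using ts_join(1)[OF Z] i le_join_iff[OF Zs] sf by (auto simp: Z_def)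
    then show "le B (f (init B)) (init (dual B))"
      using a ltrans[of "f (init B)" "?sf (init B)" "init (dual B)"] T_in[OF f i] T_in[OF ts_join(2)[OF Z] i] sf by blast
  next
    assume "le B (f (init B)) (init (dual B))"
    then have "f \<in> Z" using f by (simp add: Z_def)
    then show "le (ts B) f ?sf" using ts_join(3)[OF Z] unfolding is_lub_def by blast
  qed
  show "\<exists>sf\<in>St (ts B). fin (ts B) = {s \<in> St (ts B). \<not> le (ts B) s sf}"
    using ts_join(2)[OF Z] key fin_ts by blast
qed

end

lemma rqc_Union: "finite I \<Longrightarrow> (\<And>i. i \<in> I \<Longrightarrow> F i \<in> rqc_states B) \<Longrightarrow> (\<Union>i\<in>I. F i) \<in> rqc_states B"
proof (induction I rule: finite_induct)
  case empty then show ?case by (simp add: rqc_states.empty)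
next
  case (insert x I) then show ?case by (simp add: rqc_states.union)
qed

lemma rqc_join: assumes Y: "finite Y" "Y \<subseteq> rqc_states B" shows "join (rqc B) Y = \<Union>Y"
proof -
  have U: "\<Union>Y \<in> rqc_states B" using rqc_Union[of Y "\<lambda>K. K" B] Y by auto
  show ?thesis unfolding join_def
  proof (rule the_equality)
    show "is_lub (rqc B) Y (\<Union>Y)" using U by (auto simp: is_lub_def rqc_def)
  next
    fix x assume "is_lub (rqc B) Y x"
    then have h: "x \<in> rqc_states B" "\<forall>y\<in>Y. y \<subseteq> x" "\<forall>z\<in>rqc_states B. (\<forall>y\<in>Y. y \<subseteq> z) \<longrightarrow> x \<subseteq> z"
      by (simp_all add: is_lub_def rqc_def)
    have "x \<subseteq> \<Union>Y" using h(3) U by blast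
    moreover have "\<Union>Y \<subseteq> x" using h(2) by blast
    ultimately show "x = \<Union>Y" by (rule equalityI)
  qed
qed

lemma iso_from_morph:
  assumes m: "morphism P Q f" and bij: "bij_betw f (St P) (St Q)"
    and dP: "\<And>a s. s \<in> St P \<Longrightarrow> delta P a s \<in> St P"
    and iP: "init P \<in> St P"
    and jP: "\<And>X. finite X \<Longrightarrow> X \<subseteq> St P \<Longrightarrow> join P X \<in> St P"
  shows "jdfa_iso P Q"
proof -
  define g where "g = inv_into (St P) f"
  have inj: "inj_on f (St P)" and im: "f ` St P = St Q" using bij by (auto simp: bij_betw_def)
  have gf: "\<And>s. s \<in> St P \<Longrightarrow> g (f s) = s" using inj by (simp add: g_def)
  have fg: "\<And>t. t \<in> St Q \<Longrightarrow> f (g t) = t" using im by (simp add: g_def f_inv_into_f)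
  have gin: "\<And>t. t \<in> St Q \<Longrightarrow> g t \<in> St P" using im by (auto simp: g_def intro: inv_into_into)
  have mf: "join_pres P Q f" "\<And>a s. s \<in> St P \<Longrightarrow> f (delta P a s) = delta Q a (f s)"
    "f (init P) = init Q" "\<And>s. s \<in> St P \<Longrightarrow> s \<in> fin P \<longleftrightarrow> f s \<in> fin Q"
    using m by (auto simp: morphism_def)
  have mg: "morphism Q P g"
    unfolding morphism_def
  proof (intro conjI allI ballI)
    show "join_pres Q P g" unfolding join_pres_def
    proof (intro conjI allI impI)
      show "g ` St Q \<subseteq> St P" using gin by auto
    next
      fix X assume X: "X \<subseteq> St Q \<and> finite X"
      have Y: "finite (g ` X)" "g ` X \<subseteq> St P" using X gin by auto
      have "f (join P (g ` X)) = join Q (f ` g ` X)" using mf(1) Y unfolding join_pres_def by blast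
      also have "f ` g ` X = X"
      proof -
        have "f ` g ` X = (\<lambda>t. f (g t)) ` X" by (simp add: image_image)
        also have "... = (\<lambda>t. t) ` X" by (rule image_cong) (use X fg in auto)
        finally show ?thesis by simp
      qed
      finally have e: "f (join P (g ` X)) = join Q X" .
      have "g (join Q X) = g (f (join P (g ` X)))" using e by simp
      also have "... = join P (g ` X)" using gf jP[OF Y] by blast
      finally show "g (join Q X) = join P (g ` X)" .
    qed
  next
    fix a t assume t: "t \<in> St Q"
    have "f (delta P a (g t)) = delta Q a t" using mf(2)[OF gin[OF t]] fg[OF t] by simp
    then have "g (delta Q a t) = g (f (delta P a (g t)))" by simp
    also have "... = delta P a (g t)" using gf dP gin t by blast
    finally show "g (delta Q a t) = delta P a (g t)" .
  next
    have "g (init Q) = g (f (init P))" using mf(3) by simp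
    also have "... = init P" using gf iP by blast
    finally show "g (init Q) = init P" .
  next
    fix t assume t: "t \<in> St Q"
    show "t \<in> fin Q \<longleftrightarrow> g t \<in> fin P" using mf(4)[OF gin[OF t]] fg[OF t] by simp
  qed
  show ?thesis unfolding jdfa_iso_def using m mg gf fg by blast
qed

locale jslA = fixes A :: "('s,'c) jdfa" assumes jA: "jsl_dfa A"

sublocale jslA \<subseteq> AA: jsl A by unfold_locales (rule jA)
sublocale jslA \<subseteq> T: jsl "ts A" by unfold_locales (rule jsl.jsl_ts, unfold_locales, rule jA)

context jslA begin

definition D :: "'c list \<Rightarrow> 's \<Rightarrow> 's" where
  "D u = (\<lambda>s. if s \<in> St A then dword A u s else undefined)"

lemma dword_ts: "f \<in> St (ts A) \<Longrightarrow> dword (ts A) u f = (\<lambda>s. if s \<in> St A then dword A u (f s) else undefined)"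
proof (induction u arbitrary: f)
  case Nil
  show ?case by (rule ext) (simp add: AA.T_out[OF Nil.prems])
next
  case (Cons a u)
  have d: "delta (ts A) a f \<in> St (ts A)" using AA.delta_ts(2)[OF Cons.prems] .
  have "dword (ts A) (a#u) f = dword (ts A) u (delta (ts A) a f)" by simp
  also have "... = (\<lambda>s. if s \<in> St A then dword A u (delta (ts A) a f s) else undefined)"
    by (rule Cons.IH[OF d])
  also have "... = (\<lambda>s. if s \<in> St A then dword A (a#u) (f s) else undefined)"
    by (rule ext) (simp add: AA.delta_ts(1)[OF Cons.prems])
  finally show ?case .
qed

lemma D_eq: "D u = dword (ts A) u (init (ts A))"
proof -
  have "dword (ts A) u (init (ts A)) = (\<lambda>s. if s \<in> St A then dword A u (init (ts A) s) else undefined)"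
    by (rule dword_ts[OF AA.init_ts(2)])
  also have "... = D u" by (rule ext) (simp add: AA.init_ts(1) D_def)
  finally show ?thesis by simp
qed

lemma D_in: "D u \<in> St (ts A)"
  unfolding D_eq by (rule T.dword_in[OF T.init_in])

lemma le_D: "le (ts A) (D u) f \<longleftrightarrow> (\<forall>s\<in>St A. le A (dword A u s) (f s))"
  by (simp add: AA.le_ts D_def)

lemma phi_char: "f \<in> St (ts A) \<Longrightarrow> lang (dual (ts A)) f = {w. \<not> le (ts A) (D (rev w)) f}"
  using T.lang_dual D_eq by simp

lemma phi_le_sf: "le (ts A) (D u) (init (dual (ts A))) \<longleftrightarrow> le A (dword A u (init A)) (init (dual A))"
proof -
  have e1: "D u \<in> fin (ts A) \<longleftrightarrow> \<not> le (ts A) (D u) (init (dual (ts A)))"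
    by (subst conjunct2[OF T.sf]) (simp add: D_in)
  have e2: "D u \<in> fin (ts A) \<longleftrightarrow> \<not> le A (D u (init A)) (init (dual A))"
    by (subst AA.fin_ts) (simp add: D_in)
  have e3: "D u (init A) = dword A u (init A)" by (simp add: D_def AA.init_in)
  show ?thesis using e1 e2 e3 by simp
qed

lemma phi_init: "lang (dual (ts A)) (init (dual (ts A))) = lang (dual A) (init (dual A))"
  using phi_char[OF conjunct1[OF T.sf]] AA.lang_dual[OF conjunct1[OF AA.sf]] phi_le_sf by simp

lemma phi_fin: "f \<in> St (ts A) \<Longrightarrow> f \<in> fin (dual (ts A)) \<longleftrightarrow> [] \<in> lang (dual (ts A)) f"
  using phi_char D_eq[of "[]"] by simp

lemma phi_glb: assumes X: "X \<subseteq> St (ts A)"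
  shows "lang (dual (ts A)) (join (dual (ts A)) X) = \<Union>(lang (dual (ts A)) ` X)"
proof (rule set_eqI)
  fix w
  note g = T.glb[OF X]
  have "w \<in> lang (dual (ts A)) (join (dual (ts A)) X) \<longleftrightarrow> \<not> le (ts A) (D (rev w)) (join (dual (ts A)) X)"
    using phi_char g by simp
  also have "... \<longleftrightarrow> \<not> (\<forall>y\<in>X. le (ts A) (D (rev w)) y)" using g D_in by blast
  also have "... \<longleftrightarrow> (\<exists>y\<in>X. w \<in> lang (dual (ts A)) y)"
  proof -
    have "\<And>y. y \<in> X \<Longrightarrow> w \<in> lang (dual (ts A)) y \<longleftrightarrow> \<not> le (ts A) (D (rev w)) y"
      using phi_char X by blast
    then show ?thesis by blast
  qed
  finally show "w \<in> lang (dual (ts A)) (join (dual (ts A)) X) \<longleftrightarrow> w \<in> \<Union>(lang (dual (ts A)) ` X)"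
    by blast
qed

lemma le_from_D: assumes f: "f \<in> St (ts A)" and g: "g \<in> St (ts A)"
  and h: "\<And>u. le (ts A) (D u) f \<Longrightarrow> le (ts A) (D u) g"
  shows "le (ts A) f g"
proof -
  obtain W where W: "finite W" "f = tsmap A W" using AA.T_rep f by blast
  show ?thesis unfolding AA.le_ts
  proof
    fix s assume s: "s \<in> St A"
    have Ws: "finite ((\<lambda>w. dword A w s) ` W)" "(\<lambda>w. dword A w s) ` W \<subseteq> St A"
      using W AA.dword_in s by auto
    have fs: "f s = join A ((\<lambda>w. dword A w s) ` W)" using W AA.tsmap_app s by simp
    show "le A (f s) (g s)"
      unfolding fs AA.le_join_iff[OF Ws AA.T_in[OF g s]]
    proof
      fix x assume "x \<in> (\<lambda>w. dword A w s) ` W"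
      then obtain u where u: "u \<in> W" "x = dword A u s" by blast
      have "le (ts A) (D u) f" unfolding le_D
      proof
        fix s' assume s': "s' \<in> St A"
        have Ws': "finite ((\<lambda>w. dword A w s') ` W)" "(\<lambda>w. dword A w s') ` W \<subseteq> St A"
          using W AA.dword_in s' by auto
        show "le A (dword A u s') (f s')"
          using AA.J1[OF Ws'] u W AA.tsmap_app s' by simp
      qed
      then have "le (ts A) (D u) g" by (rule h)
      then show "le A x (g s)" using u s le_D by blast
    qed
  qed
qed

lemma phi_inj: "f \<in> St (ts A) \<Longrightarrow> g \<in> St (ts A) \<Longrightarrow> lang (dual (ts A)) f = lang (dual (ts A)) g \<Longrightarrow> f = g"
proof -
  assume f: "f \<in> St (ts A)" and g: "g \<in> St (ts A)" and e: "lang (dual (ts A)) f = lang (dual (ts A)) g"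
  have k: "le (ts A) (D u) f \<longleftrightarrow> le (ts A) (D u) g" for u
  proof -
    have "rev u \<in> lang (dual (ts A)) f \<longleftrightarrow> rev u \<in> lang (dual (ts A)) g" using e by simp
    then show ?thesis using phi_char f g by simp
  qed
  have "le (ts A) f g" by (rule le_from_D[OF f g]) (use k in blast)
  moreover have "le (ts A) g f" by (rule le_from_D[OF g f]) (use k in blast)
  ultimately show "f = g" using AA.ts_antisym f g by blast
qed

lemma G: "join (ts A) (D ` C) \<in> St (ts A)"
  "u \<in> C \<Longrightarrow> le (ts A) (D u) (join (ts A) (D ` C))"
  "s \<in> St A \<Longrightarrow> join (ts A) (D ` C) s = join A ((\<lambda>u. dword A u s) ` C)"
proof -
  have sub: "D ` C \<subseteq> St (ts A)" using D_in by auto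
  have fin: "finite (D ` C)" using finite_subset[OF sub AA.fin_T] .
  show "join (ts A) (D ` C) \<in> St (ts A)" using AA.ts_join(2)[OF fin sub] .
  show "u \<in> C \<Longrightarrow> le (ts A) (D u) (join (ts A) (D ` C))"
    using AA.ts_join(3)[OF fin sub] unfolding is_lub_def by blast
  assume s: "s \<in> St A"
  have "(\<lambda>f. f s) ` D ` C = (\<lambda>u. dword A u s) ` C" using s by (simp add: image_image D_def)
  then show "join (ts A) (D ` C) s = join A ((\<lambda>u. dword A u s) ` C)"
    using AA.ts_join(1)[OF fin sub] s by simp
qed

lemma Gle: assumes s: "s \<in> St A" and z: "z \<in> St A"
  shows "le A (join (ts A) (D ` C) s) z \<longleftrightarrow> (\<forall>u\<in>C. le A (dword A u s) z)"
proof -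
  have sub: "(\<lambda>u. dword A u s) ` C \<subseteq> St A" using AA.dword_in s by auto
  have fin: "finite ((\<lambda>u. dword A u s) ` C)" using finite_subset[OF sub AA.fin_St] .
  show ?thesis using G(3)[OF s] AA.le_join_iff[OF fin sub z] by simp
qed

lemma phi_surj: "K \<in> rqc_states (dual A) \<Longrightarrow> \<exists>f\<in>St (ts A). lang (dual (ts A)) f = K"
proof (induction rule: rqc_states.induct)
  case (base t)
  then have t: "t \<in> St A" by simp
  define C where "C = {u. le A (dword A u (init A)) t}"
  let ?f = "join (ts A) (D ` C)"
  have i: "init A \<in> St A" by (rule AA.init_in)
  have key: "le (ts A) (D v) ?f \<longleftrightarrow> le A (dword A v (init A)) t" for v
  proof
    assume "le (ts A) (D v) ?f"
    then have a: "le A (dword A v (init A)) (?f (init A))" using le_D i by blast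
    have b: "le A (?f (init A)) t" using Gle[OF i t] by (simp add: C_def)
    show "le A (dword A v (init A)) t"
      using AA.ltrans[OF AA.dword_in[OF i] AA.T_in[OF G(1) i] t a b] .
  next
    assume "le A (dword A v (init A)) t"
    then show "le (ts A) (D v) ?f" using G(2) by (simp add: C_def)
  qed
  have "lang (dual (ts A)) ?f = lang (dual A) t"
    using phi_char[OF G(1)] AA.lang_dual[OF t] key by simp
  then show ?case using G(1) by blast
next
  case empty
  let ?f = "join (ts A) (D ` UNIV)"
  have "lang (dual (ts A)) ?f = {}" using phi_char[OF G(1)] G(2) by simp
  then show ?case using G(1) by blast
next
  case (union K K')
  then obtain f f' where f: "f \<in> St (ts A)" "lang (dual (ts A)) f = K"
    and f': "f' \<in> St (ts A)" "lang (dual (ts A)) f' = K'" by blast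
  have X: "{f, f'} \<subseteq> St (ts A)" using f f' by simp
  have "lang (dual (ts A)) (join (dual (ts A)) {f, f'}) = K \<union> K'"
    using phi_glb[OF X] f f' by simp
  then show ?case using conjunct1[OF T.glb[OF X]] by blast
next
  case (rderiv K v)
  then obtain f where f: "f \<in> St (ts A)" "lang (dual (ts A)) f = K" by blast
  define r where "r = rev v"
  define C where "C = {u. \<forall>s\<in>St A. le A (dword A u (dword A r s)) (f s)}"
  let ?h = "join (ts A) (D ` C)"
  have key: "le (ts A) (D x) ?h \<longleftrightarrow> (\<forall>s\<in>St A. le A (dword A x (dword A r s)) (f s))" for x
  proof
    assume h: "le (ts A) (D x) ?h"
    show "\<forall>s\<in>St A. le A (dword A x (dword A r s)) (f s)"
    proof
      fix s assume s: "s \<in> St A"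
      have s': "dword A r s \<in> St A" using AA.dword_in s by blast
      have a: "le A (dword A x (dword A r s)) (?h (dword A r s))" using h le_D s' by blast
      have b: "le A (?h (dword A r s)) (f s)" using Gle[OF s' AA.T_in[OF f(1) s]] s by (auto simp: C_def)
      show "le A (dword A x (dword A r s)) (f s)"
        using AA.ltrans[OF AA.dword_in[OF s'] AA.T_in[OF G(1) s'] AA.T_in[OF f(1) s] a b] .
    qed
  next
    assume "\<forall>s\<in>St A. le A (dword A x (dword A r s)) (f s)"
    then show "le (ts A) (D x) ?h" using G(2) by (simp add: C_def)
  qed
  have e1: "lang (dual (ts A)) ?h = {w. \<not> (\<forall>s\<in>St A. le A (dword A (rev w) (dword A r s)) (f s))}"
    using phi_char[OF G(1)] key by simp
  have e2: "{w. w @ v \<in> K} = {w. \<not> (\<forall>s\<in>St A. le A (dword A (rev w) (dword A r s)) (f s))}"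
    using phi_char[OF f(1), unfolded le_D] f(2) by (simp add: r_def)
  have "lang (dual (ts A)) ?h = {w. w @ v \<in> K}" using e1 e2 by simp
  then show ?case using G(1) by blast
qed

lemma phi_rqc: assumes R: "reachable A" and f: "f \<in> St (ts A)"
  shows "lang (dual (ts A)) f \<in> rqc_states (dual A)"
proof -
  define U where "U s = (SOME X. finite X \<and> X \<subseteq> {dword A w (init A) | w. True} \<and> s = join A X)" for s
  have U: "finite (U s) \<and> U s \<subseteq> {dword A w (init A) | w. True} \<and> s = join A (U s)" if s: "s \<in> St A" for s
    unfolding U_def by (rule someI_ex) (use R s in \<open>auto simp: reachable_def\<close>)
  have Usub: "U s \<subseteq> St A" if s: "s \<in> St A" for s
    using U[OF s] AA.dword_in AA.init_in by blast
  define V where "V x = (SOME u. x = dword A u (init A))" for x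
  have V: "x = dword A (V x) (init A)" if "x \<in> U s" "s \<in> St A" for x s
  proof -
    have "\<exists>u. x = dword A u (init A)" using U[OF that(2)] that(1) by blast
    then show ?thesis unfolding V_def by (rule someI_ex)
  qed
  have eq: "lang (dual (ts A)) f = (\<Union>s\<in>St A. \<Union>x\<in>U s. {w. w @ rev (V x) \<in> lang (dual A) (f s)})"
  proof (rule set_eqI)
    fix w
    have c1: "w \<in> lang (dual (ts A)) f \<longleftrightarrow> (\<exists>s\<in>St A. \<not> le A (dword A (rev w) s) (f s))"
      using phi_char[OF f] le_D by simp
    have c2: "le A (dword A (rev w) s) (f s) \<longleftrightarrow> (\<forall>x\<in>U s. le A (dword A (rev w) x) (f s))"
      if s: "s \<in> St A" for s
    proof -
      have fs: "finite (dword A (rev w) ` U s)" "dword A (rev w) ` U s \<subseteq> St A"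
        using U[OF s] Usub[OF s] AA.dword_in by auto
      have "dword A (rev w) s = join A (dword A (rev w) ` U s)"
        using AA.dword_join[of "U s" "rev w"] U[OF s] Usub[OF s] by metis
      then show ?thesis using AA.le_join_iff[OF fs AA.T_in[OF f s]] by simp
    qed
    have c3: "w @ rev (V x) \<in> lang (dual A) (f s) \<longleftrightarrow> \<not> le A (dword A (rev w) x) (f s)"
      if s: "s \<in> St A" and x: "x \<in> U s" for s x
    proof -
      have "w @ rev (V x) \<in> lang (dual A) (f s) \<longleftrightarrow> \<not> le A (dword A (rev w) (dword A (V x) (init A))) (f s)"
        using AA.lang_dual[OF AA.T_in[OF f s]] by simp
      then show ?thesis using V[OF x s] by simp
    qed
    show "w \<in> lang (dual (ts A)) f \<longleftrightarrow> w \<in> (\<Union>s\<in>St A. \<Union>x\<in>U s. {w. w @ rev (V x) \<in> lang (dual A) (f s)})"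
      using c1 c2 c3 by auto
  qed
  have "(\<Union>s\<in>St A. \<Union>x\<in>U s. {w. w @ rev (V x) \<in> lang (dual A) (f s)}) \<in> rqc_states (dual A)"
  proof (rule rqc_Union[OF AA.fin_St])
    fix s assume s: "s \<in> St A"
    show "(\<Union>x\<in>U s. {w. w @ rev (V x) \<in> lang (dual A) (f s)}) \<in> rqc_states (dual A)"
    proof (rule rqc_Union)
      show "finite (U s)" using U[OF s] by blast
    next
      fix x assume "x \<in> U s"
      have "lang (dual A) (f s) \<in> rqc_states (dual A)"
        using rqc_states.base[of "f s" "dual A"] AA.T_in[OF f s] by simp
      then show "{w. w @ rev (V x) \<in> lang (dual A) (f s)} \<in> rqc_states (dual A)"
        by (rule rqc_states.rderiv)
    qed
  qed
  then show ?thesis using eq by simp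
qed

end

theorem proposition3p14:
  fixes A :: "('s, 'c) jdfa"
  assumes "jsl_dfa A" and "reachable A"
  shows "jdfa_iso (dual (ts A)) (rqc (dual A))"
proof -
  interpret jslA A by unfold_locales (rule assms(1))
  have StQ: "St (rqc (dual A)) = rqc_states (dual A)" by (simp add: rqc_def)
  have m: "morphism (dual (ts A)) (rqc (dual A)) (lang (dual (ts A)))"
    unfolding morphism_def
  proof (intro conjI allI ballI)
    show "join_pres (dual (ts A)) (rqc (dual A)) (lang (dual (ts A)))" unfolding join_pres_def
    proof (intro conjI allI impI)
      show "lang (dual (ts A)) ` St (dual (ts A)) \<subseteq> St (rqc (dual A))"
        using phi_rqc[OF assms(2)] StQ by auto
    next
      fix X assume X: "X \<subseteq> St (dual (ts A)) \<and> finite X"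
      have "lang (dual (ts A)) ` X \<subseteq> rqc_states (dual A)" using X phi_rqc[OF assms(2)] by auto
      moreover have "finite (lang (dual (ts A)) ` X)" using X by blast
      ultimately have j: "join (rqc (dual A)) (lang (dual (ts A)) ` X) = \<Union>(lang (dual (ts A)) ` X)"
        using rqc_join by blast
      have X': "X \<subseteq> St (ts A)" using X by simp
      show "lang (dual (ts A)) (join (dual (ts A)) X) = join (rqc (dual A)) (lang (dual (ts A)) ` X)"
        unfolding j by (rule phi_glb[OF X'])
    qed
  next
    fix a s
    show "lang (dual (ts A)) (delta (dual (ts A)) a s) = delta (rqc (dual A)) a (lang (dual (ts A)) s)"
      by (simp add: lang_delta rqc_def)
  next
    show "lang (dual (ts A)) (init (dual (ts A))) = init (rqc (dual A))"
      using phi_init by (simp add: rqc_def)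
  next
    fix s assume s: "s \<in> St (dual (ts A))"
    show "s \<in> fin (dual (ts A)) \<longleftrightarrow> lang (dual (ts A)) s \<in> fin (rqc (dual A))"
      using phi_fin[of s] s phi_rqc[OF assms(2), of s] by (simp add: rqc_def)
  qed
  have bij: "bij_betw (lang (dual (ts A))) (St (dual (ts A))) (St (rqc (dual A)))"
    unfolding bij_betw_def
  proof
    show "inj_on (lang (dual (ts A))) (St (dual (ts A)))"
      unfolding inj_on_def using phi_inj by simp
    show "lang (dual (ts A)) ` St (dual (ts A)) = St (rqc (dual A))"
    proof
      show "lang (dual (ts A)) ` St (dual (ts A)) \<subseteq> St (rqc (dual A))"
        using phi_rqc[OF assms(2)] StQ by auto
      show "St (rqc (dual A)) \<subseteq> lang (dual (ts A)) ` St (dual (ts A))"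
      proof
        fix K assume "K \<in> St (rqc (dual A))"
        then obtain f where "f \<in> St (ts A)" "lang (dual (ts A)) f = K" using phi_surj StQ by auto
        then show "K \<in> lang (dual (ts A)) ` St (dual (ts A))" by auto
      qed
    qed
  qed
  show ?thesis
  proof (rule iso_from_morph[OF m bij])
    show "\<And>a s. s \<in> St (dual (ts A)) \<Longrightarrow> delta (dual (ts A)) a s \<in> St (dual (ts A))"
      using T.adj by simp
    show "init (dual (ts A)) \<in> St (dual (ts A))" using T.sf by simp
    show "\<And>X. finite X \<Longrightarrow> X \<subseteq> St (dual (ts A)) \<Longrightarrow> join (dual (ts A)) X \<in> St (dual (ts A))"
      using T.glb by simp
  qed
qed

end
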